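(* For $1\le i\le N$ and every holomorphic $V_\tau$-valued function $f$ on $\Omega$, $$L(x)\bigl(\mathcal{U}_i-1-\kappa\gamma\bigr)\bigl(L^{-1}f\bigr)(x)=x_i\partial_if(x)-\kappa\sum_{j<i}\frac{x_i}{x_i-x_j}\bigl(\sigma^M(i,j)f\bigr)(x)-\kappa\sum_{j>i}\frac{x_j}{x_i-x_j}\bigl(\sigma^M(i,j)f\bigr)(x).$$
   Context: Setup: $\tau$ is a partition of $N$ (not $(N)$, $(1^N)$) identified with the irreducible orthogonal representation of $\mathcal{S}_N$ on $V_\tau\cong\mathbb{C}^{n_\tau}$ (orthonormal basis), $\tau(i,j):=\tau((i,j))$. $c(i,T)=(\text{column of }i)-(\text{row of }i)$ in a standard tableau $T$, $S_1(\tau)=\sum_ic(i,T)$, $\gamma=S_1(\tau)/N$. $\mathcal{S}_N$ acts on $x$ by $(xw)_i=x_{w(i)}$. $\mathbb{C}^N_{reg}=\{x\in(\mathbb{C}\setminus\{0\})^N:x_i\neq x_j,\ i\ne j\}$; $\Omega\subset\mathbb{C}^N_{reg}$ is open with $\Omega w=\Omega$ for all $w$. $L:\Omega\to GL_{n_\tau}(\mathbb{C})$ is holomorphic and satisfies $\partial_iL(x)=\kappa L(x)\bigl\{\sum_{j\ne i}\frac{\tau(i,j)}{x_i-x_j}-\frac{\gamma}{x_i}I\bigr\}$, $1\le i\le N$ ($\kappa\in\mathbb{R}$). $M:\mathcal{S}_N\times\Omega\to GL_{n_\tau}(\mathbb{C})$ is locally constant in $x$ with $M(I,x)=I$, $M(w_1w_2,x)=M(w_2,xw_1)M(w_1,x)$,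 and $L(xw)=M(w,x)L(x)\tau(w)$. $(\sigma^M(w)f)(x)=M(w,x)^{-1}f(xw)$. The operators $\mathcal{D}_i g(x)=\partial_ig(x)+\kappa\sum_{j\ne i}\tau(i,j)\frac{g(x)-g(x(i,j))}{x_i-x_j}$ and $\mathcal{U}_ig(x)=\mathcal{D}_i(x_ig)(x)-\kappa\sum_{j<i}\tau(i,j)g(x(i,j))$ are applied to holomorphic $V_\tau$-valued functions $g$ on $\Omega$. *)

theory Defs
  imports "HOL-Analysis.Analysis"
begin

text \<open>Coordinates of x in C^N are indexed by a finite linearly ordered type 'n
  (N = CARD('n)); the order on 'n plays the role of the order on 1..N.\<close>

definition tr :: "'a \<Rightarrow> 'a \<Rightarrow> 'a \<Rightarrow> 'a" where
  "tr a b = (\<lambda>k. if k = a then b else if k = b then a else k)"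

definition act :: "complex^'n \<Rightarrow> ('n \<Rightarrow> 'n) \<Rightarrow> complex^'n" where
  "act x w = (\<chi> i. x $ w i)"

definition reg_set :: "(complex^'n) set" where
  "reg_set = {x. (\<forall>i. x $ i \<noteq> 0) \<and> (\<forall>i j. i \<noteq> j \<longrightarrow> x $ i \<noteq> x $ j)}"

definition upd :: "complex^'n \<Rightarrow> 'n \<Rightarrow> complex \<Rightarrow> complex^'n" where
  "upd x i t = (\<chi> k. if k = i then t else x $ k)"

definition cdiff_at :: "(complex^'n \<Rightarrow> complex) \<Rightarrow> complex^'n \<Rightarrow> bool" where
  "cdiff_at g x \<longleftrightarrow> (\<exists>D. (g has_derivative D) (at x) \<and> (\<forall>c v. D (c *s v) = c * D v))"

definition holo_vec :: "(complex^'n \<Rightarrow> complex^'t) \<Rightarrow> (complex^'n) set \<Rightarrow> bool" where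
  "holo_vec f S \<longleftrightarrow> (\<forall>x\<in>S. \<forall>k. cdiff_at (\<lambda>y. f y $ k) x)"

definition holo_mat :: "(complex^'n \<Rightarrow> complex^'t^'s) \<Rightarrow> (complex^'n) set \<Rightarrow> bool" where
  "holo_mat F S \<longleftrightarrow> (\<forall>x\<in>S. \<forall>k l. cdiff_at (\<lambda>y. F y $ k $ l) x)"

definition pd_vec :: "'n \<Rightarrow> (complex^'n \<Rightarrow> complex^'t) \<Rightarrow> complex^'n \<Rightarrow> complex^'t" where
  "pd_vec i f x = (\<chi> k. deriv (\<lambda>t. f (upd x i t) $ k) (x $ i))"

definition pd_mat :: "'n \<Rightarrow> (complex^'n \<Rightarrow> complex^'t^'s) \<Rightarrow> complex^'n \<Rightarrow> complex^'t^'s" where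
  "pd_mat i F x = (\<chi> k l. deriv (\<lambda>t. F (upd x i t) $ k $ l) (x $ i))"

definition locally_const_on :: "(complex^'n) set \<Rightarrow> (complex^'n \<Rightarrow> 'b) \<Rightarrow> bool" where
  "locally_const_on S g \<longleftrightarrow> (\<forall>x\<in>S. \<exists>e>0. \<forall>y\<in>S. dist y x < e \<longrightarrow> g y = g x)"

definition is_partition :: "nat list \<Rightarrow> nat \<Rightarrow> bool" where
  "is_partition lam N \<longleftrightarrow> sorted_wrt (\<ge>) lam \<and> (\<forall>p\<in>set lam. 0 < p) \<and> sum_list lam = N"

text \<open>Cells (row, column), both 0-based.\<close>
definition cells :: "nat list \<Rightarrow> (nat \<times> nat) set" where
  "cells lam = {(r, c). r < length lam \<and> c < lam ! r}"

definition content :: "nat \<times> nat \<Rightarrow> int" where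
  "content rc = int (snd rc) - int (fst rc)"

text \<open>A standard tableau of shape lam filled with the (ordered) labels 'n:
  T a is the cell containing label a.\<close>
definition std_tableau :: "nat list \<Rightarrow> ('n::linorder \<Rightarrow> nat \<times> nat) \<Rightarrow> bool" where
  "std_tableau lam T \<longleftrightarrow> bij_betw T UNIV (cells lam) \<and>
     (\<forall>a b. fst (T a) = fst (T b) \<and> snd (T a) < snd (T b) \<longrightarrow> a < b) \<and>
     (\<forall>a b. snd (T a) = snd (T b) \<and> fst (T a) < fst (T b) \<longrightarrow> a < b)"

text \<open>S_1(tau) = sum over i of c(i,T); since T is a bijection from labels onto
  the cells, this is the sum of contents over all cells.\<close>
definition S1 :: "nat list \<Rightarrow> int" where
  "S1 lam = (\<Sum>rc\<in>cells lam. content rc)"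

definition adjacent :: "'n::linorder \<Rightarrow> 'n \<Rightarrow> bool" where
  "adjacent a b \<longleftrightarrow> a < b \<and> \<not> (\<exists>c. a < c \<and> c < b)"

text \<open>Young's orthogonal form: the basis of V_tau = C^'t is indexed by standard
  tableaux via tab; the matrix of tau(a,b), a b adjacent labels, column t.\<close>
definition young_matrix ::
  "('t \<Rightarrow> ('n::linorder \<Rightarrow> nat \<times> nat)) \<Rightarrow> 'n \<Rightarrow> 'n \<Rightarrow> complex^'t^'t" where
  "young_matrix tab a b = (\<chi> u t.
     (let T = tab t in
      if fst (T a) = fst (T b) then (if u = t then 1 else 0)
      else if snd (T a) = snd (T b) then (if u = t then -1 else 0)
      else (let r = real_of_int (content (T b) - content (T a)) in
            if u = t then complex_of_real (1 / r)
            else if tab u = T \<circ> tr a b then complex_of_real (sqrt (1 - 1 / r\<^sup>2))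
            else 0)))"

definition young_orthogonal_rep ::
  "nat list \<Rightarrow> ('t \<Rightarrow> ('n::{finite,linorder} \<Rightarrow> nat \<times> nat)) \<Rightarrow> (('n \<Rightarrow> 'n) \<Rightarrow> complex^'t^'t) \<Rightarrow> bool" where
  "young_orthogonal_rep lam tab tau \<longleftrightarrow>
     is_partition lam CARD('n) \<and>
     bij_betw tab UNIV {T. std_tableau lam T} \<and>
     (\<forall>w1 w2. w1 permutes UNIV \<longrightarrow> w2 permutes UNIV \<longrightarrow> tau (w1 \<circ> w2) = tau w1 ** tau w2) \<and>
     (\<forall>a b. adjacent a b \<longrightarrow> tau (tr a b) = young_matrix tab a b)"

definition dunklD :: "(('n \<Rightarrow> 'n) \<Rightarrow> complex^'t^'t) \<Rightarrow> real \<Rightarrow> 'n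
    \<Rightarrow> (complex^'n \<Rightarrow> complex^'t) \<Rightarrow> complex^'n \<Rightarrow> complex^'t" where
  "dunklD tau kappa i g x = pd_vec i g x +
     complex_of_real kappa *s (\<Sum>j\<in>UNIV - {i}.
        (1 / (x $ i - x $ j)) *s (tau (tr i j) *v (g x - g (act x (tr i j)))))"

definition opU :: "(('n::{finite,linorder} \<Rightarrow> 'n::{finite,linorder}) \<Rightarrow> complex^'t^'t) \<Rightarrow> real \<Rightarrow> 'n::{finite,linorder}
    \<Rightarrow> (complex^'n::{finite,linorder} \<Rightarrow> complex^'t) \<Rightarrow> complex^'n::{finite,linorder} \<Rightarrow> complex^'t" where
  "opU tau kappa i g x = dunklD tau kappa i (\<lambda>y. (y $ i) *s g y) x -
     complex_of_real kappa *s (\<Sum>j\<in>{j. j < i}. tau (tr i j) *v g (act x (tr i j)))"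

definition sigmaM :: "(('n::finite \<Rightarrow> 'n) \<Rightarrow> complex^'n \<Rightarrow> complex^'t^'t) \<Rightarrow> ('n \<Rightarrow> 'n)
    \<Rightarrow> (complex^'n \<Rightarrow> complex^'t) \<Rightarrow> complex^'n \<Rightarrow> complex^'t" where
  "sigmaM M w f x = matrix_inv (M w x) *v f (act x w)"

end

theory Submission
  imports Defs
begin


lemma minv_both: assumes "invertible (A::'a::semiring_1^'n^'n)"
  shows "A ** matrix_inv A = mat 1 \<and> matrix_inv A ** A = mat 1"
proof -
  have "\<exists>A'. A ** A' = mat 1 \<and> A' ** A = mat 1" using assms by (simp add: invertible_def)
  then show ?thesis unfolding matrix_inv_def by (rule someI_ex)
qed
lemma minv_right: "invertible (A::'a::semiring_1^'n^'n) \<Longrightarrow> A ** matrix_inv A = mat 1"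
  using minv_both by blast
lemma minv_left: "invertible (A::'a::semiring_1^'n^'n) \<Longrightarrow> matrix_inv A ** A = mat 1"
  using minv_both by blast

lemma mv_sum: "(A::complex^'m^'n) *v (\<Sum>j\<in>S. v j) = (\<Sum>j\<in>S. A *v v j)"
  by (induct S rule: infinite_finite_induct) (auto simp: matrix_vector_right_distrib)

lemma upd_eq: "upd x i t = axis i t + (x - axis i (x$i))"
  by (auto simp: vec_eq_iff upd_def axis_def)

lemma upd_same: "upd x i (x$i) = x" by (simp add: upd_def vec_eq_iff)
lemma upd_nth_same[simp]: "upd x i t $ i = t" by (simp add: upd_def)

lemma bl_axis: "bounded_linear (axis i :: complex \<Rightarrow> complex^'n)"
proof (rule bounded_linear_intro[where K=1])
  show "axis i (a + b) = (axis i a + axis i b :: complex^'n)" for a b by (auto simp: vec_eq_iff axis_def)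
  show "axis i (r *\<^sub>R a) = (r *\<^sub>R axis i a :: complex^'n)" for r a by (auto simp: vec_eq_iff axis_def)
  show "norm (axis i a :: complex^'n) \<le> norm (a::complex) * 1" for a
  proof -
    have "inner (axis i a) (axis i a) = inner a a" by (simp add: inner_axis)
    then have "norm (axis i a) = norm a" by (simp add: norm_eq_sqrt_inner)
    then show ?thesis by simp
  qed
qed

lemma upd_deriv: "((\<lambda>t. upd x i t) has_derivative axis i) (at t0)"
proof -
  have hd: "((\<lambda>t. axis i t + (x - axis i (x$i))) has_derivative axis i) (at t0)"
    by (intro has_derivative_add_const bounded_linear_imp_has_derivative bl_axis)
  have eq: "(\<lambda>t. axis i t + (x - axis i (x$i))) = (\<lambda>t. upd x i t)"
    by (rule ext) (rule upd_eq[symmetric])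
  show ?thesis using hd unfolding eq .
qed

lemma upd_cont: "continuous_on UNIV (\<lambda>t. upd x i t)"
proof (rule continuous_at_imp_continuous_on, intro ballI)
  fix t :: complex
  show "isCont (\<lambda>t. upd x i t) t" using has_derivative_continuous[OF upd_deriv[of x i t]] .
qed

lemma ev_in: assumes "open Omega" "x \<in> Omega"
  shows "eventually (\<lambda>t. upd x i t \<in> Omega) (nhds (x$i))"
proof -
  have "open ((\<lambda>t. upd x i t) -` Omega)" using open_vimage[OF assms(1) upd_cont] .
  moreover have "x$i \<in> (\<lambda>t. upd x i t) -` Omega" using assms(2) by (simp add: upd_same)
  ultimately show ?thesis unfolding eventually_nhds
    by (intro exI[of _ "(\<lambda>t. upd x i t) -` Omega"]) simp
qed

lemma cdiff_upd: assumes "cdiff_at h x"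
  shows "(\<lambda>t. h (upd x i t)) field_differentiable (at (x$i))"
proof -
  obtain D where D: "(h has_derivative D) (at x)" "\<And>c v. D (c *s v) = c * D v"
    using assms unfolding cdiff_at_def by blast
  have ux: "upd x i (x$i) = x" by (simp add: upd_def vec_eq_iff)
  have hd: "((\<lambda>t. h (upd x i t)) has_derivative (\<lambda>s. D (axis i s))) (at (x$i))"
    by (rule has_derivative_compose[OF upd_deriv]) (simp add: ux D(1))
  have e2: "(*) (D (axis i 1)) = (\<lambda>s. D (axis i s))"
  proof
    fix s
    have "axis i s = s *s axis i (1::complex)" by (simp add: vec_eq_iff axis_def)
    then have "D (axis i s) = s * D (axis i 1)" by (metis D(2))
    then show "D (axis i 1) * s = D (axis i s)" by (metis mult.commute)
  qed
  have "((\<lambda>t. h (upd x i t)) has_derivative (*) (D (axis i 1))) (at (x$i))"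
    unfolding e2 by (rule hd)
  then have "((\<lambda>t. h (upd x i t)) has_field_derivative D (axis i 1)) (at (x$i))"
    unfolding has_field_derivative_def .
  then show ?thesis unfolding field_differentiable_def by blast
qed

lemma fd_prod: "finite I \<Longrightarrow> (\<And>a. a \<in> I \<Longrightarrow> (f a) field_differentiable (at t0)) \<Longrightarrow>
  (\<lambda>t. \<Prod>a\<in>I. f a t) field_differentiable (at t0)"
proof (induct I rule: finite_induct)
  case empty
  then show ?case by (simp add: field_differentiable_const)
next
  case (insert a I)
  have h1: "f a field_differentiable (at t0)" using insert.prems by simp
  have h2: "(\<lambda>t. \<Prod>a\<in>I. f a t) field_differentiable (at t0)"
    using insert.hyps(3) insert.prems by simp
  have h: "(\<lambda>t. f a t * (\<Prod>a\<in>I. f a t)) field_differentiable (at t0)"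
    by (rule field_differentiable_mult[OF h1 h2])
  have eq: "(\<lambda>t. \<Prod>a\<in>insert a I. f a t) = (\<lambda>t. f a t * (\<Prod>a\<in>I. f a t))"
    using insert(1,2) by (simp add: prod.insert)
  show ?case unfolding eq by (rule h)
qed

lemma det_fd: "(\<And>a b. (\<lambda>t. A t $ a $ b) field_differentiable (at t0)) \<Longrightarrow>
   (\<lambda>t. det (A t :: complex^'n^'n)) field_differentiable (at t0)"
  unfolding det_def
  apply (rule field_differentiable_sum)
  apply (rule field_differentiable_mult[OF field_differentiable_const])
  apply (rule fd_prod)
   apply simp
  apply blast
  done

lemma cramer_inv: assumes "invertible (A::complex^'n^'n)"
  shows "matrix_inv A *v b = (\<chi> k. det(\<chi> i j. if j=k then b$i else A$i$j) / det A)"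
proof -
  have d: "det A \<noteq> 0" using assms invertible_det_nz by blast
  have "A *v (matrix_inv A *v b) = b"
    by (simp add: matrix_vector_mul_assoc minv_right[OF assms])
  then show ?thesis using cramer[OF d] by blast
qed

lemma key_fd:
  fixes L :: "complex^'n \<Rightarrow> complex^'t^'t" and f :: "complex^'n \<Rightarrow> complex^'t"
  assumes op: "open Omega" and x: "x \<in> Omega" and Lh: "holo_mat L Omega"
    and Li: "\<And>y. y \<in> Omega \<Longrightarrow> invertible (L y)" and fh: "holo_vec f Omega"
  shows "(\<lambda>t. (matrix_inv (L (upd x i t)) *v f (upd x i t)) $ k) field_differentiable (at (x$i))"
proof -
  have Ld: "(\<lambda>t. L (upd x i t) $ a $ b) field_differentiable (at (x$i))" for a b
    using cdiff_upd Lh x unfolding holo_mat_def by blast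
  have fd: "(\<lambda>t. f (upd x i t) $ a) field_differentiable (at (x$i))" for a
    using cdiff_upd fh x unfolding holo_vec_def by blast
  define C where "C t = det(\<chi> a b. if b=k then f (upd x i t) $ a else L (upd x i t) $ a $ b) / det (L (upd x i t))" for t
  have Cd: "C field_differentiable (at (x$i))"
    unfolding C_def
  proof (rule field_differentiable_divide)
    show "(\<lambda>t. det (\<chi> a b. if b=k then f (upd x i t) $ a else L (upd x i t) $ a $ b)) field_differentiable (at (x$i))"
    proof (rule det_fd)
      fix a b
      show "(\<lambda>t. (\<chi> a b. if b=k then f (upd x i t) $ a else L (upd x i t) $ a $ b) $ a $ b) field_differentiable (at (x$i))"
        using Ld fd by (cases "b = k") auto
    qed
    show "(\<lambda>t. det (L (upd x i t))) field_differentiable (at (x$i))"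
      by (rule det_fd) (rule Ld)
    show "det (L (upd x i (x$i))) \<noteq> 0"
      using Li[OF x] invertible_det_nz upd_same by metis
  qed
  have ev: "eventually (\<lambda>t. C t = (matrix_inv (L (upd x i t)) *v f (upd x i t)) $ k) (nhds (x$i))"
    using ev_in[OF op x] by eventually_elim (simp add: cramer_inv Li C_def)
  obtain d where "(C has_field_derivative d) (at (x$i))" using Cd field_differentiable_def by blast
  then have "((\<lambda>t. (matrix_inv (L (upd x i t)) *v f (upd x i t)) $ k) has_field_derivative d) (at (x$i))"
    using DERIV_cong_ev[OF refl ev refl] by blast
  then show ?thesis using field_differentiable_def by blast
qed

lemma key_prod:
  fixes L :: "complex^'n \<Rightarrow> complex^'t^'t" and f :: "complex^'n \<Rightarrow> complex^'t"
  assumes op: "open Omega" and x: "x \<in> Omega" and Lh: "holo_mat L Omega"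
    and Li: "\<And>y. y \<in> Omega \<Longrightarrow> invertible (L y)" and fh: "holo_vec f Omega"
  shows "pd_vec i f x = pd_mat i L x *v (matrix_inv (L x) *v f x)
           + L x *v pd_vec i (\<lambda>y. matrix_inv (L y) *v f y) x"
proof -
  define G where "G t = matrix_inv (L (upd x i t)) *v f (upd x i t)" for t
  have ux: "upd x i (x$i) = x" by (rule upd_same)
  have Ld: "((\<lambda>t. L (upd x i t) $ a $ b) has_field_derivative pd_mat i L x $ a $ b) (at (x$i))" for a b
  proof -
    have "(\<lambda>t. L (upd x i t) $ a $ b) field_differentiable (at (x$i))"
      using cdiff_upd Lh x unfolding holo_mat_def by blast
    then show ?thesis unfolding pd_mat_def by (simp add: DERIV_deriv_iff_field_differentiable)
  qed
  have fd: "((\<lambda>t. f (upd x i t) $ a) has_field_derivative pd_vec i f x $ a) (at (x$i))" for a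
  proof -
    have "(\<lambda>t. f (upd x i t) $ a) field_differentiable (at (x$i))"
      using cdiff_upd fh x unfolding holo_vec_def by blast
    then show ?thesis unfolding pd_vec_def by (simp add: DERIV_deriv_iff_field_differentiable)
  qed
  have Gd: "((\<lambda>t. G t $ a) has_field_derivative pd_vec i (\<lambda>y. matrix_inv (L y) *v f y) x $ a) (at (x$i))" for a
  proof -
    have "(\<lambda>t. G t $ a) field_differentiable (at (x$i))"
      unfolding G_def by (rule key_fd[OF op x Lh Li fh])
    then show ?thesis unfolding pd_vec_def G_def by (simp add: DERIV_deriv_iff_field_differentiable)
  qed
  have G0: "G (x$i) = matrix_inv (L x) *v f x" by (simp add: G_def ux)
  show ?thesis
  proof (subst vec_eq_iff, intro allI)
    fix k
    have ev: "eventually (\<lambda>t. f (upd x i t) $ k = (\<Sum>m\<in>UNIV. L (upd x i t) $ k $ m * G t $ m)) (nhds (x$i))"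
      using ev_in[OF op x]
    proof eventually_elim
      case (elim t)
      have "f (upd x i t) = L (upd x i t) *v G t"
        by (simp add: G_def matrix_vector_mul_assoc minv_right[OF Li[OF elim]])
      then show ?case by (simp add: matrix_vector_mult_def)
    qed
    have "((\<lambda>t. \<Sum>m\<in>UNIV. L (upd x i t) $ k $ m * G t $ m) has_field_derivative
        (\<Sum>m\<in>UNIV. pd_mat i L x $ k $ m * G (x$i) $ m
             + pd_vec i (\<lambda>y. matrix_inv (L y) *v f y) x $ m * L (upd x i (x$i)) $ k $ m)) (at (x$i))"
      by (intro DERIV_sum DERIV_mult Ld Gd)
    then have "((\<lambda>t. f (upd x i t) $ k) has_field_derivative
        (\<Sum>m\<in>UNIV. pd_mat i L x $ k $ m * G (x$i) $ m
             + pd_vec i (\<lambda>y. matrix_inv (L y) *v f y) x $ m * L (upd x i (x$i)) $ k $ m)) (at (x$i))"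
      using DERIV_cong_ev[OF refl ev refl] by blast
    then have "pd_vec i f x $ k = (\<Sum>m\<in>UNIV. pd_mat i L x $ k $ m * G (x$i) $ m
             + pd_vec i (\<lambda>y. matrix_inv (L y) *v f y) x $ m * L (upd x i (x$i)) $ k $ m)"
      using DERIV_unique[OF fd] by blast
    then show "pd_vec i f x $ k = (pd_mat i L x *v (matrix_inv (L x) *v f x)
           + L x *v pd_vec i (\<lambda>y. matrix_inv (L y) *v f y) x) $ k"
      by (simp add: G0 ux matrix_vector_mult_def sum.distrib mult.commute)
  qed
qed

lemma key_xg:
  fixes L :: "complex^'n \<Rightarrow> complex^'t^'t" and f :: "complex^'n \<Rightarrow> complex^'t"
  assumes op: "open Omega" and x: "x \<in> Omega" and Lh: "holo_mat L Omega"
    and Li: "\<And>y. y \<in> Omega \<Longrightarrow> invertible (L y)" and fh: "holo_vec f Omega"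
  shows "pd_vec i (\<lambda>y. (y $ i) *s (matrix_inv (L y) *v f y)) x
     = (matrix_inv (L x) *v f x) + (x$i) *s pd_vec i (\<lambda>y. matrix_inv (L y) *v f y) x"
proof (subst vec_eq_iff, intro allI)
  fix k
  define G where "G t = matrix_inv (L (upd x i t)) *v f (upd x i t)" for t
  have ux: "upd x i (x$i) = x" by (rule upd_same)
  have Gd: "((\<lambda>t. G t $ k) has_field_derivative pd_vec i (\<lambda>y. matrix_inv (L y) *v f y) x $ k) (at (x$i))"
  proof -
    have "(\<lambda>t. G t $ k) field_differentiable (at (x$i))"
      unfolding G_def by (rule key_fd[OF op x Lh Li fh])
    then show ?thesis unfolding pd_vec_def G_def by (simp add: DERIV_deriv_iff_field_differentiable)
  qed
  have "((\<lambda>t. t * G t $ k) has_field_derivative 1 * G (x$i) $ k + pd_vec i (\<lambda>y. matrix_inv (L y) *v f y) x $ k * (x$i)) (at (x$i))"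
    by (intro DERIV_mult DERIV_ident Gd)
  then have "deriv (\<lambda>t. t * G t $ k) (x$i) = 1 * G (x$i) $ k + pd_vec i (\<lambda>y. matrix_inv (L y) *v f y) x $ k * (x$i)"
    by (rule DERIV_imp_deriv)
  then show "pd_vec i (\<lambda>y. (y $ i) *s (matrix_inv (L y) *v f y)) x $ k
     = ((matrix_inv (L x) *v f x) + (x$i) *s pd_vec i (\<lambda>y. matrix_inv (L y) *v f y) x) $ k"
    unfolding pd_vec_def by (simp add: G_def ux mult.commute)
qed



lemma ite_mult0: "(if P then (c::complex) else 0) * a = (if P then c * a else 0)" by simp

lemma mat_mv1: "mat c *v v = c *s (v::complex^'m)"
  by (simp add: vec_eq_iff matrix_vector_mult_def mat_def ite_mult0)

lemma mat_mv: "(mat c ** A) *v v = c *s (A *v (v::complex^'m))"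
proof -
  have "(mat c ** A) *v v = mat c *v (A *v v)" by (simp add: matrix_vector_mul_assoc)
  also have "\<dots> = c *s (A *v v)" by (rule mat_mv1)
  finally show ?thesis .
qed

lemma summat_mv: "(\<Sum>j\<in>S. A j) *v (v::complex^'m) = (\<Sum>j\<in>S. A j *v v)"
  by (induct S rule: infinite_finite_induct) (auto simp: matrix_vector_mult_add_rdistrib)

lemma tr_permutes: "tr a b permutes UNIV"
proof -
  have "tr a b \<circ> tr a b = id" by (auto simp: tr_def)
  then have "bij (tr a b)" using o_bij by blast
  then show ?thesis by (rule bij_imp_permutes) simp
qed

lemma act_tr_i: "act x (tr i j) $ i = x $ j"
  by (simp add: act_def tr_def)

theorem proposition4:
  fixes lam :: "nat list"
    and tab :: "'t::finite \<Rightarrow> ('n::{finite,linorder} \<Rightarrow> nat \<times> nat)"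
    and tau :: "('n::{finite,linorder} \<Rightarrow> 'n::{finite,linorder}) \<Rightarrow> complex^'t^'t"
    and kappa gamma :: real
    and Omega :: "(complex^'n::{finite,linorder}) set"
    and L :: "complex^'n::{finite,linorder} \<Rightarrow> complex^'t^'t"
    and M :: "('n::{finite,linorder} \<Rightarrow> 'n::{finite,linorder}) \<Rightarrow> complex^'n::{finite,linorder} \<Rightarrow> complex^'t^'t"
    and f :: "complex^'n::{finite,linorder} \<Rightarrow> complex^'t"
    and i :: "'n::{finite,linorder}"
  assumes rep: "young_orthogonal_rep lam tab tau"
    and not_triv: "lam \<noteq> [CARD('n)]"
    and not_sign: "lam \<noteq> replicate CARD('n) 1"
    and gamma_def: "gamma = real_of_int (S1 lam) / real CARD('n)"
    and Omega_open: "open Omega"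
    and Omega_reg: "Omega \<subseteq> reg_set"
    and Omega_inv: "\<And>w x. w permutes UNIV \<Longrightarrow> x \<in> Omega \<Longrightarrow> act x w \<in> Omega"
    and L_holo: "holo_mat L Omega"
    and L_inv: "\<And>x. x \<in> Omega \<Longrightarrow> invertible (L x)"
    and L_ode: "\<And>k x. x \<in> Omega \<Longrightarrow>
        pd_mat k L x = mat (complex_of_real kappa) ** L x **
          ((\<Sum>j\<in>UNIV - {k}. mat (1 / (x $ k - x $ j)) ** tau (tr k j))
           - mat (complex_of_real gamma / x $ k))"
    and M_lc: "\<And>w. w permutes UNIV \<Longrightarrow> locally_const_on Omega (M w)"
    and M_inv: "\<And>w x. w permutes UNIV \<Longrightarrow> x \<in> Omega \<Longrightarrow> invertible (M w x)"
    and M_id: "\<And>x. x \<in> Omega \<Longrightarrow> M id x = mat 1"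
    and M_cocycle: "\<And>w1 w2 x. w1 permutes UNIV \<Longrightarrow> w2 permutes UNIV \<Longrightarrow> x \<in> Omega \<Longrightarrow>
        M (w1 \<circ> w2) x = M w2 (act x w1) ** M w1 x"
    and L_equiv: "\<And>w x. w permutes UNIV \<Longrightarrow> x \<in> Omega \<Longrightarrow>
        L (act x w) = M w x ** L x ** tau w"
    and f_holo: "holo_vec f Omega"
  shows "\<forall>x\<in>Omega.
    L x *v (opU tau kappa i (\<lambda>y. matrix_inv (L y) *v f y) x
            - (\<lambda>y. matrix_inv (L y) *v f y) x
            - complex_of_real (kappa * gamma) *s ((\<lambda>y. matrix_inv (L y) *v f y) x))
    = (x $ i) *s pd_vec i f x
      - complex_of_real kappa *s (\<Sum>j\<in>{j. j < i}.
           (x $ i / (x $ i - x $ j)) *s sigmaM M (tr i j) f x)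
      - complex_of_real kappa *s (\<Sum>j\<in>{j. i < j}.
           (x $ j / (x $ i - x $ j)) *s sigmaM M (tr i j) f x)"
  apply (intro ballI)
  subgoal premises xOp for x
proof -
  have xO: "x \<in> Omega" by (rule xOp)
  define g where "g = (\<lambda>y. matrix_inv (L y) *v f y)"
  define T where "T j = tau (tr i j)" for j
  define Q where "Q j = sigmaM M (tr i j) f x" for j
  define P where "P j = L x *v (T j *v g x)" for j
  define k' where "k' = complex_of_real kappa"
  define c' where "c' = complex_of_real gamma"
  have xreg: "x \<in> reg_set" using xO Omega_reg by blast
  have xi0: "x$i \<noteq> 0" using xreg by (simp add: reg_set_def)
  have xij: "x$i - x$j \<noteq> 0" if "j \<noteq> i" for j using xreg that by (simp add: reg_set_def)
  have sig: "L x *v (T j *v g (act x (tr i j))) = Q j" for j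
  proof -
    let ?w = "tr i j"
    have wp: "?w permutes UNIV" by (rule tr_permutes)
    have yO: "act x ?w \<in> Omega" using Omega_inv[OF wp xO] .
    have Ly: "L (act x ?w) = M ?w x ** L x ** tau ?w" using L_equiv[OF wp xO] .
    have Lyi: "invertible (L (act x ?w))" using L_inv[OF yO] .
    have Mi: "invertible (M ?w x)" using M_inv[OF wp xO] .
    define X where "X = L x ** tau ?w ** matrix_inv (L (act x ?w))"
    have "M ?w x ** X = L (act x ?w) ** matrix_inv (L (act x ?w))"
      unfolding X_def Ly by (simp add: matrix_mul_assoc)
    also have "\<dots> = mat 1" by (rule minv_right[OF Lyi])
    finally have MX: "M ?w x ** X = mat 1" .
    have "X = (matrix_inv (M ?w x) ** M ?w x) ** X" by (simp add: minv_left[OF Mi])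
    also have "\<dots> = matrix_inv (M ?w x)" by (metis matrix_mul_assoc MX matrix_mul_rid)
    finally have X: "X = matrix_inv (M ?w x)" .
    have "L x *v (T j *v g (act x ?w)) = X *v f (act x ?w)"
      by (simp add: X_def T_def g_def matrix_vector_mul_assoc matrix_mul_assoc)
    then show ?thesis by (simp add: X Q_def sigmaM_def)
  qed
  have prod: "pd_vec i f x = pd_mat i L x *v g x + L x *v pd_vec i g x"
    unfolding g_def by (rule key_prod[OF Omega_open xO L_holo L_inv f_holo])
  have xg: "pd_vec i (\<lambda>y. (y $ i) *s g y) x = g x + (x$i) *s pd_vec i g x"
    unfolding g_def by (rule key_xg[OF Omega_open xO L_holo L_inv f_holo])
  have ode: "pd_mat i L x *v g x = k' *s (\<Sum>j\<in>UNIV - {i}. (1 / (x$i - x$j)) *s P j)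
      - (k' * (c' / x$i)) *s (L x *v g x)"
  proof -
    have "pd_mat i L x *v g x = k' *s (L x *v (((\<Sum>j\<in>UNIV - {i}. mat (1 / (x $ i - x $ j)) ** tau (tr i j))
           - mat (c' / x $ i)) *v g x))"
      unfolding L_ode[OF xO] k'_def c'_def
      by (simp add: mat_mv mat_mv1 flip: matrix_vector_mul_assoc)
    also have "\<dots> = k' *s (\<Sum>j\<in>UNIV - {i}. (1 / (x$i - x$j)) *s P j)
      - (k' * (c' / x$i)) *s (L x *v g x)"
      by (simp add: matrix_vector_mult_diff_rdistrib summat_mv mat_mv mat_mv1 mv_sum
          matrix_vector_mult_diff_distrib vector_scalar_commute P_def T_def
          vector_ssub_ldistrib vector_smult_assoc)
    finally show ?thesis .
  qed
  have Pf: "L x *v (tau (tr i j) *v g x) = P j" for j by (simp add: P_def T_def)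
  have sigf: "L x *v (tau (tr i j) *v g (act x (tr i j))) = Q j" for j using sig[of j] by (simp add: T_def)
  have U: "L x *v opU tau kappa i g x = L x *v g x + x$i *s (L x *v pd_vec i g x)
     + k' *s (\<Sum>j\<in>UNIV-{i}. (1/(x$i-x$j)) *s (x$i *s P j - x$j *s Q j)) - k' *s (\<Sum>j\<in>{j. j<i}. Q j)"
    unfolding opU_def dunklD_def
    by (simp add: xg act_tr_i matrix_vector_right_distrib matrix_vector_mult_diff_distrib mv_sum
       vector_scalar_commute Pf sigf k'_def)
  have LG: "L x *v pd_vec i g x = pd_vec i f x - pd_mat i L x *v g x" by (simp add: prod)
  have E: "L x *v (opU tau kappa i g x - g x - complex_of_real (kappa * gamma) *s g x)
     = L x *v g x + x$i *s (pd_vec i f x - (k' *s (\<Sum>j\<in>UNIV - {i}. (1 / (x$i - x$j)) *s P j)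
      - (k' * (c' / x$i)) *s (L x *v g x)))
     + k' *s (\<Sum>j\<in>UNIV-{i}. (1/(x$i-x$j)) *s (x$i *s P j - x$j *s Q j)) - k' *s (\<Sum>j\<in>{j. j<i}. Q j)
     - L x *v g x - (k' * c') *s (L x *v g x)"
  proof -
    have "L x *v (opU tau kappa i g x - g x - complex_of_real (kappa * gamma) *s g x)
       = L x *v opU tau kappa i g x - L x *v g x - (k' * c') *s (L x *v g x)"
      by (simp only: matrix_vector_mult_diff_distrib vector_scalar_commute of_real_mult k'_def c'_def)
    then show ?thesis unfolding U LG ode .
  qed
  have final: "L x *v (opU tau kappa i g x - g x - complex_of_real (kappa * gamma) *s g x)
    = (x $ i) *s pd_vec i f x
      - complex_of_real kappa *s (\<Sum>j\<in>{j. j < i}.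
           (x $ i / (x $ i - x $ j)) *s Q j)
      - complex_of_real kappa *s (\<Sum>j\<in>{j. i < j}.
           (x $ j / (x $ i - x $ j)) *s Q j)"
  proof -
    define d where "d j = 1 / (x$i - x$j)" for j
    define Sp where "Sp = (\<Sum>j\<in>UNIV-{i}. d j *s P j)"
    define Ql where "Ql = (\<Sum>j\<in>{j. j<i}. Q j)"
    define Bl where "Bl = (\<Sum>j\<in>{j. j<i}. (d j * x$j) *s Q j)"
    define Bg where "Bg = (\<Sum>j\<in>{j. i<j}. (x$j/(x$i-x$j)) *s Q j)"
    define Al where "Al = (\<Sum>j\<in>{j. j<i}. (x$i/(x$i-x$j)) *s Q j)"
    have V1a: "(\<Sum>j\<in>UNIV-{i}. d j *s (x$i *s P j - x$j *s Q j))
        = x$i *s Sp - (\<Sum>j\<in>UNIV-{i}. (d j * x$j) *s Q j)"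
      by (simp add: vec_eq_iff Sp_def sum_subtractf sum_distrib_left algebra_simps)
    have split: "UNIV - {i} = {j. j<i} \<union> {j. i<j}" by auto
    have V1b: "(\<Sum>j\<in>UNIV-{i}. (d j * x$j) *s Q j) = Bl + (\<Sum>j\<in>{j. i<j}. (d j * x$j) *s Q j)"
      unfolding split Bl_def by (rule sum.union_disjoint) auto
    have V1c: "(\<Sum>j\<in>{j. i<j}. (d j * x$j) *s Q j) = Bg"
      unfolding Bg_def by (rule sum.cong) (auto simp: d_def)
    have V3: "Bl + Ql = Al"
    proof -
      have "Bl + Ql = (\<Sum>j\<in>{j. j<i}. (d j * x$j) *s Q j + Q j)"
        by (simp add: Bl_def Ql_def sum.distrib)
      also have "\<dots> = Al"
        unfolding Al_def
      proof (rule sum.cong)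
        fix j assume "j \<in> {j. j < i}"
        then have "j \<noteq> i" by simp
        then have ne: "x$i - x$j \<noteq> 0" by (rule xij)
        have "d j * x$j + 1 = x$i/(x$i-x$j)" using ne by (simp add: d_def field_simps)
        then show "(d j * x$j) *s Q j + Q j = (x$i/(x$i-x$j)) *s Q j"
          by (metis vector_sadd_rdistrib vector_smult_lid)
      qed simp
      finally show ?thesis .
    qed
    have E': "L x *v (opU tau kappa i g x - g x - complex_of_real (kappa * gamma) *s g x)
     = L x *v g x + x$i *s (pd_vec i f x - (k' *s Sp - (k' * (c' / x$i)) *s (L x *v g x)))
     + k' *s (x$i *s Sp - (Bl + Bg)) - k' *s Ql - L x *v g x - (k' * c') *s (L x *v g x)"
      using E V1a V1b V1c unfolding d_def Sp_def Ql_def by simp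
    show ?thesis
      unfolding E' k'_def[symmetric] Bg_def[symmetric] Al_def[symmetric] V3[symmetric]
      using xi0 by (simp add: vec_eq_iff field_simps)
  qed
  show ?thesis using final by (simp only: g_def Q_def)
qed
  done

end
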